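(* Let $\mathbb{F}_q$ be a finite field of characteristic $p$ with $q$ elements, $d\ge 2$ an integer, $l$ the smallest prime divisor of $d$, $D_d$ the set of decomposable polynomials of degree $d$ in $\mathbb{F}_q[x]$, and $$\alpha_d=\begin{cases}0 & d=l,\\ q^{2l}(1-q^{-1}) & d=l^2,\\ 2q^{l+d/l}(1-q^{-1}) & \text{otherwise.}\end{cases}$$ Then: (1) if $d$ is prime, $D_d=\varnothing$; (2) $\#D_d\le \alpha_d(1+q^{-d/(3l^2)})$; (3) if $p\nmid d$, then $|\#D_d-\alpha_d|\le \alpha_d\, q^{-d/(3l^2)}$.
   Context: For $g,h\in\mathbb{F}_q[x]$, $g\circ h=g(h)$. A polynomial is decomposable if it equals $g\circ h$ with $\deg g\ge 2$ and $\deg h\ge 2$. *)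

theory Defs
  imports "HOL-Computational_Algebra.Computational_Algebra" "HOL-Library.Cardinality"
begin

definition decomposable :: "'a::field poly \<Rightarrow> bool" where
  "decomposable f \<longleftrightarrow> (\<exists>g h. degree g \<ge> 2 \<and> degree h \<ge> 2 \<and> f = pcompose g h)"

definition decomp_set :: "nat \<Rightarrow> 'a::field poly set" where
  "decomp_set d = {f. degree f = d \<and> decomposable f}"

definition min_prime_factor :: "nat \<Rightarrow> nat" where
  "min_prime_factor d = Min {l. prime l \<and> l dvd d}"

definition alpha_d :: "nat \<Rightarrow> nat \<Rightarrow> real" where
  "alpha_d q d = (let l = min_prime_factor d in
     if d = l then 0
     else if d = l^2 then real q ^ (2*l) * (1 - 1 / real q)
     else 2 * real q ^ (l + d div l) * (1 - 1 / real q))"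

end

theory Submission
  imports Defs "HOL-Library.FuncSet"
begin


lemma card_coeff_constr:
  fixes c :: "nat \<Rightarrow> 'a::{finite,field}"
  assumes B: "B \<subseteq> {..n}"
  shows "card {p::'a poly. degree p \<le> n \<and> (\<forall>i\<in>B. coeff p i = c i)} = CARD('a) ^ (Suc n - card B)"
proof -
  let ?S = "{p::'a poly. degree p \<le> n \<and> (\<forall>i\<in>B. coeff p i = c i)}"
  let ?C = "{..n} - B"
  let ?f = "\<lambda>p::'a poly. restrict (coeff p) ?C"
  have "bij_betw ?f ?S (Pi\<^sub>E ?C (\<lambda>_. UNIV :: 'a set))"
  proof (rule bij_betw_imageI)
    show "inj_on ?f ?S"
    proof (rule inj_onI)
      fix p1 p2 assume p1: "p1 \<in> ?S" and p2: "p2 \<in> ?S" and eq: "?f p1 = ?f p2"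
      show "p1 = p2"
      proof (rule poly_eqI)
        fix i
        show "coeff p1 i = coeff p2 i"
        proof (cases "i \<le> n")
          case True
          show ?thesis
          proof (cases "i \<in> B")
            case True then show ?thesis using p1 p2 by auto
          next
            case False
            then have "i \<in> ?C" using \<open>i \<le> n\<close> by auto
            then show ?thesis using fun_cong[OF eq, of i] by auto
          qed
        next
          case False
          then show ?thesis using p1 p2 by (simp add: coeff_eq_0)
        qed
      qed
    qed
  next
    show "?f ` ?S = Pi\<^sub>E ?C (\<lambda>_. UNIV :: 'a set)"
    proof
      show "?f ` ?S \<subseteq> Pi\<^sub>E ?C (\<lambda>_. UNIV :: 'a set)" by (intro image_subsetI, subst restrict_PiE_iff) simp
    next
      show "Pi\<^sub>E ?C (\<lambda>_. UNIV :: 'a set) \<subseteq> ?f ` ?S"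
      proof
        fix \<phi> assume phi: "\<phi> \<in> Pi\<^sub>E ?C (\<lambda>_. UNIV :: 'a set)"
        define xs where "xs = map (\<lambda>i. if i \<in> B then c i else \<phi> i) [0..<Suc n]"
        define p where "p = Poly xs"
        have cp: "coeff p i = (if i \<le> n then (if i \<in> B then c i else \<phi> i) else 0)" for i
          by (auto simp: p_def xs_def nth_default_def simp del: upt_Suc)
        have "degree p \<le> n" by (rule degree_le) (auto simp: cp)
        moreover have "\<forall>i\<in>B. coeff p i = c i" using B by (auto simp: cp)
        moreover have "?f p = \<phi>"
          using phi by (auto simp: cp fun_eq_iff PiE_def extensional_def)
        ultimately show "\<phi> \<in> ?f ` ?S" by force
      qed
    qed
  qed
  then have "card ?S = card (Pi\<^sub>E ?C (\<lambda>_. UNIV :: 'a set))" by (rule bij_betw_same_card)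
  also have "\<dots> = CARD('a) ^ card ?C" by (simp add: card_PiE)
  also have "card ?C = Suc n - card B" using B by (simp add: card_Diff_subset finite_subset)
  finally show ?thesis .
qed

definition GG :: "nat \<Rightarrow> 'a::field poly set" where "GG k = {g. degree g = k}"
definition PP :: "nat \<Rightarrow> 'a::field poly set" where
  "PP e = {h. lead_coeff h = 1 \<and> coeff h 0 = 0 \<and> degree h = e}"

lemma card_le_n: "card {p::'a::{finite,field} poly. degree p \<le> n} = CARD('a) ^ Suc n"
  using card_coeff_constr[of "{}" n "\<lambda>_. 0"] by simp

lemma finite_le_n: "finite {p::'a::{finite,field} poly. degree p \<le> n}"
  using card_le_n[of n, where 'a='a] by (intro card_ge_0_finite) simp

lemma card_GG:
  assumes "k \<ge> 1"
  shows "card (GG k :: 'a::{finite,field} poly set) = CARD('a) ^ Suc k - CARD('a) ^ k"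
proof -
  have eq: "GG k = {p::'a poly. degree p \<le> k} - {p. degree p \<le> k \<and> (\<forall>i\<in>{k}. coeff p i = 0)}"
    using assms by (auto simp: GG_def le_antisym le_degree coeff_eq_0)
  have "card (GG k :: 'a poly set) = CARD('a) ^ Suc k - CARD('a) ^ (Suc k - 1)"
    unfolding eq
    by (subst card_Diff_subset) (auto intro: finite_subset[OF _ finite_le_n] simp: card_le_n card_coeff_constr[of "{k}" k "\<lambda>_. 0", simplified])
  then show ?thesis by simp
qed

lemma card_PP:
  assumes "e \<ge> 1"
  shows "card (PP e :: 'a::{finite,field} poly set) = CARD('a) ^ (e - 1)"
proof -
  define c :: "nat \<Rightarrow> 'a" where "c i = (if i = 0 then 0 else 1)" for i
  have eq: "PP e = {p::'a poly. degree p \<le> e \<and> (\<forall>i\<in>{0,e}. coeff p i = c i)}"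
  proof (intro set_eqI iffI)
    fix p assume "p \<in> {p::'a poly. degree p \<le> e \<and> (\<forall>i\<in>{0,e}. coeff p i = c i)}"
    then have "degree p \<le> e" "coeff p e = 1" "coeff p 0 = 0" using assms by (auto simp: c_def)
    moreover have "degree p = e" using calculation by (metis le_antisym le_degree one_neq_zero)
    ultimately show "p \<in> PP e" by (auto simp: PP_def)
  qed (use assms in \<open>auto simp: PP_def c_def\<close>)
  show ?thesis unfolding eq using assms
    by (subst card_coeff_constr) (auto)
qed

lemma finite_GG: "finite (GG k :: 'a::{finite,field} poly set)"
  by (rule finite_subset[OF _ finite_le_n[of k]]) (auto simp: GG_def)
lemma finite_PP: "finite (PP k :: 'a::{finite,field} poly set)"
  by (rule finite_subset[OF _ finite_le_n[of k]]) (auto simp: PP_def)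


lemma pcompose_inj:
  fixes g1 g2 h :: "'a::field poly"
  assumes "degree h \<ge> 1" "pcompose g1 h = pcompose g2 h"
  shows "g1 = g2"
proof -
  have "pcompose (g1 - g2) h = 0" using assms by (simp add: pcompose_diff)
  then have "g1 - g2 = 0" by (rule pcompose_eq_0) (use assms in auto)
  then show ?thesis by simp
qed

lemma normalize_decomp:
  fixes g h :: "'a::field poly"
  assumes "degree h \<ge> 1"
  shows "\<exists>g' h'. h' \<in> PP (degree h) \<and> degree g' = degree g \<and> pcompose g h = pcompose g' h'"
proof -
  define a where "a = lead_coeff h"
  define b where "b = coeff h 0"
  have a0: "a \<noteq> 0" using assms by (auto simp: a_def)
  define h' where "h' = smult (inverse a) (h - [:b:])"
  define g' where "g' = pcompose g [:b, a:]"
  have dh: "degree (h - [:b:]) = degree h"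
  proof -
    have "h - [:b:] = h + [:-b:]" by simp
    also have "degree \<dots> = degree h" using assms by (intro degree_add_eq_left) simp
    finally show ?thesis .
  qed
  have lh: "lead_coeff (h - [:b:]) = a" using assms dh by (simp add: a_def coeff_pCons split: nat.split)
  have h'1: "degree h' = degree h" using a0 dh by (simp add: h'_def)
  have h'2: "lead_coeff h' = 1" using a0 lh by (simp add: h'_def dh)
  have h'3: "coeff h' 0 = 0" by (simp add: h'_def b_def)
  have hh1: "pcompose [:b, a:] h' = [:b:] + smult a h'"
    by (simp add: pcompose_pCons mult_pCons_right)
  have hh2: "smult a h' = h - [:b:]" using a0 by (simp add: h'_def)
  have hh: "pcompose [:b, a:] h' = h" using hh1 hh2 by simp
  have "pcompose g h = pcompose g' h'"
    by (simp add: g'_def pcompose_assoc[symmetric] hh)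
  moreover have "degree g' = degree g" using a0 by (simp add: g'_def degree_pcompose)
  moreover have "h' \<in> PP (degree h)" using h'1 h'2 h'3 by (simp add: PP_def)
  ultimately show ?thesis by blast
qed

lemma degree_ge1_of_coeff0:
  fixes p :: "'a::field poly"
  assumes "p \<noteq> 0" "coeff p 0 = 0" shows "degree p \<ge> 1"
proof (rule ccontr)
  assume "\<not> degree p \<ge> 1"
  then have "degree p = 0" by simp
  then have "p = [:coeff p 0:]" by (rule degree_0_id[symmetric])
  with assms show False by simp
qed

lemma approx_root:
  fixes u1 u2 h1 h2 :: "'a::field poly"
  assumes u1: "lead_coeff u1 = 1" "degree u1 = m" and u2: "lead_coeff u2 = 1" "degree u2 = m"
    and m: "m \<ge> 1" "of_nat m \<noteq> (0::'a)"
    and h1: "h1 \<in> PP e" and h2: "h2 \<in> PP e" and e: "e \<ge> 1"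
    and deg: "degree (pcompose u1 h1 - pcompose u2 h2) \<le> m * e - e"
  shows "h1 = h2"
proof (rule ccontr)
  assume ne: "h1 \<noteq> h2"
  define \<delta> where "\<delta> = h1 - h2"
  have d0: "\<delta> \<noteq> 0" using ne by (simp add: \<delta>_def)
  have dc: "coeff \<delta> 0 = 0" using h1 h2 by (simp add: \<delta>_def PP_def)
  have dd: "degree \<delta> \<ge> 1" by (rule degree_ge1_of_coeff0[OF d0 dc])
  have h1': "lead_coeff h1 = 1" "degree h1 = e" and h2': "lead_coeff h2 = 1" "degree h2 = e"
    using h1 h2 by (auto simp: PP_def)
  have h10: "h1 \<noteq> 0" "h2 \<noteq> 0" using h1' h2' by auto
  define N where "N = (m - 1) * e"
  define S where "S = (\<Sum>i<m. h2 ^ (m - Suc i) * h1 ^ i)"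
  have term_deg: "degree (h2 ^ (m - Suc i) * h1 ^ i) = N" and term_lc: "lead_coeff (h2 ^ (m - Suc i) * h1 ^ i) = 1"
    if "i < m" for i
  proof -
    have "degree (h2 ^ (m - Suc i) * h1 ^ i) = (m - Suc i) * e + i * e"
      using h10 h1' h2' by (simp add: degree_mult_eq degree_power_eq)
    also have "\<dots> = ((m - Suc i) + i) * e" by (simp add: add_mult_distrib)
    also have "(m - Suc i) + i = m - 1" using that by simp
    finally show "degree (h2 ^ (m - Suc i) * h1 ^ i) = N" by (simp add: N_def)
    show "lead_coeff (h2 ^ (m - Suc i) * h1 ^ i) = 1"
      using h1' h2' by (simp add: lead_coeff_mult lead_coeff_power)
  qed
  have cS: "coeff S N = of_nat m"
  proof -
    have "coeff S N = (\<Sum>i<m. coeff (h2 ^ (m - Suc i) * h1 ^ i) N)" by (simp add: S_def coeff_sum)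
    also have "\<dots> = (\<Sum>i<m. 1)" using term_deg term_lc by (intro sum.cong) auto
    finally show ?thesis by simp
  qed
  have dS: "degree S = N"
  proof (rule antisym)
    show "degree S \<le> N" unfolding S_def by (rule degree_sum_le) (auto simp: term_deg)
    show "N \<le> degree S" using cS m by (intro le_degree) simp
  qed
  have S0: "S \<noteq> 0" using cS m by auto
  have pw: "h1 ^ m - h2 ^ m = \<delta> * S" by (simp add: \<delta>_def S_def power_diff_sumr2)
  have dpw: "degree (h1 ^ m - h2 ^ m) = degree \<delta> + N"
    using d0 S0 dS by (simp add: pw degree_mult_eq)
  define r1 where "r1 = pcompose (u1 - monom 1 m) h1"
  define r2 where "r2 = pcompose (u2 - monom 1 m) h2"
  have mon: "pcompose (monom 1 m) h = h ^ m" for h :: "'a poly"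
  proof -
    have "pcompose ([:0,1:] ^ n) h = h ^ n" for n
      by (induction n) (simp_all add: pcompose_mult pcompose_pCons pcompose_1)
    then show ?thesis by (simp add: monom_altdef pcompose_smult)
  qed
  have dr: "degree (u - monom 1 m) \<le> m - 1" if "lead_coeff u = 1" "degree u = m" for u :: "'a poly"
  proof (rule degree_le, intro allI impI)
    fix i assume "m - 1 < i"
    then have "i \<ge> m" using m by simp
    show "coeff (u - monom 1 m) i = 0"
    proof (cases "i = m")
      case True then show ?thesis using that by (simp add: coeff_monom)
    next
      case False then show ?thesis using that \<open>i \<ge> m\<close> by (simp add: coeff_monom coeff_eq_0)
    qed
  qed
  have dr1: "degree r1 \<le> N" unfolding r1_def N_def
    using dr[OF u1] h1' by (simp add: degree_pcompose)
  have dr2: "degree r2 \<le> N" unfolding r2_def N_def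
    using dr[OF u2] h2' by (simp add: degree_pcompose)
  have dr12: "degree (r1 - r2) \<le> N" using dr1 dr2 degree_diff_le by blast
  have "pcompose u1 h1 - pcompose u2 h2 = (h1 ^ m - h2 ^ m) + (r1 - r2)"
    by (simp add: r1_def r2_def pcompose_diff mon)
  moreover have "degree ((h1 ^ m - h2 ^ m) + (r1 - r2)) = degree (h1 ^ m - h2 ^ m)"
    using dr12 dpw dd by (intro degree_add_eq_left) simp
  ultimately have "degree (pcompose u1 h1 - pcompose u2 h2) = degree \<delta> + N" using dpw by simp
  with deg dd have "1 + N \<le> m * e - e" by simp
  moreover have "m * e - e = N" by (simp add: N_def algebra_simps diff_mult_distrib)
  ultimately show False by simp
qed


lemma lead_comp_PP:
  fixes g h :: "'a::field poly"
  assumes "h \<in> PP e" "e \<ge> 1"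
  shows "lead_coeff (pcompose g h) = lead_coeff g" "degree (pcompose g h) = degree g * e"
proof -
  have h: "lead_coeff h = 1" "degree h = e" using assms by (auto simp: PP_def)
  have "lead_coeff (pcompose g h) = lead_coeff g * lead_coeff h ^ degree g"
    by (rule lead_coeff_comp) (use h assms in simp)
  then show "lead_coeff (pcompose g h) = lead_coeff g" using h by simp
  show "degree (pcompose g h) = degree g * e" using h by (simp add: degree_pcompose)
qed

lemma unique_decomp:
  fixes g1 g2 h1 h2 :: "'a::field poly"
  assumes eq: "pcompose g1 h1 = pcompose g2 h2" and h: "h1 \<in> PP e" "h2 \<in> PP e" "e \<ge> 1"
    and g: "degree g1 = k" "degree g2 = k" "k \<ge> 1" "of_nat k \<noteq> (0::'a)"
  shows "h1 = h2 \<and> g1 = g2"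
proof -
  have "lead_coeff g1 = lead_coeff g2" using lead_comp_PP(1)[OF h(1,3), of g1] lead_comp_PP(1)[OF h(2,3), of g2] eq by simp
  define c where "c = lead_coeff g1"
  have c0: "c \<noteq> 0" using g by (auto simp: c_def)
  have c2: "lead_coeff g2 = c" using \<open>lead_coeff g1 = lead_coeff g2\<close> by (simp add: c_def)
  define u1 where "u1 = smult (inverse c) g1"
  define u2 where "u2 = smult (inverse c) g2"
  have u: "lead_coeff u1 = 1" "degree u1 = k" "lead_coeff u2 = 1" "degree u2 = k"
    using c0 g c2 by (auto simp: u1_def u2_def c_def)
  have "pcompose u1 h1 - pcompose u2 h2 = 0" by (simp add: u1_def u2_def pcompose_smult eq)
  then have "degree (pcompose u1 h1 - pcompose u2 h2) \<le> k * e - e" by simp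
  from approx_root[OF u g(3,4) h this] have "h1 = h2" .
  moreover then have "g1 = g2" using eq h pcompose_inj by (auto simp: PP_def)
  ultimately show ?thesis by simp
qed

definition AA :: "nat \<Rightarrow> nat \<Rightarrow> 'a::field poly set" where
  "AA d e = (\<lambda>(g, h). pcompose g h) ` (GG (d div e) \<times> PP e)"

lemma card_AA_le: "card (AA d e :: 'a::{finite,field} poly set) \<le> card (GG (d div e) :: 'a poly set) * card (PP e :: 'a poly set)"
  unfolding AA_def by (metis card_cartesian_product card_image_le finite_GG finite_PP finite_cartesian_product)

lemma card_AA_eq:
  assumes "e \<ge> 1" "d div e \<ge> 1" "of_nat (d div e) \<noteq> (0::'a::{finite,field})"
  shows "card (AA d e :: 'a poly set) = card (GG (d div e) :: 'a poly set) * card (PP e :: 'a poly set)"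
proof -
  have "inj_on (\<lambda>(g, h). pcompose g h) (GG (d div e) \<times> (PP e :: 'a poly set))"
  proof (rule inj_onI, clarify)
    fix g1 h1 g2 h2 :: "'a poly"
    assume "g1 \<in> GG (d div e)" "h1 \<in> PP e" "g2 \<in> GG (d div e)" "h2 \<in> PP e" "pcompose g1 h1 = pcompose g2 h2"
    then show "g1 = g2 \<and> h1 = h2" using unique_decomp[of g1 h1 g2 h2 e "d div e"] assms by (auto simp: GG_def)
  qed
  then show ?thesis unfolding AA_def by (simp add: card_image card_cartesian_product)
qed

definition EE :: "nat \<Rightarrow> nat set" where "EE d = {e. e dvd d \<and> 2 \<le> e \<and> 2 \<le> d div e}"

lemma finite_EE: "d > 0 \<Longrightarrow> finite (EE d)"
  by (rule finite_subset[of _ "{..d}"]) (auto simp: EE_def dest: dvd_imp_le)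

lemma decomp_subset: "(decomp_set d :: 'a::field poly set) \<subseteq> (\<Union>e\<in>EE d. AA d e)"
proof
  fix f :: "'a poly" assume "f \<in> decomp_set d"
  then obtain g h where gh: "degree g \<ge> 2" "degree h \<ge> 2" "f = pcompose g h" and df: "degree f = d"
    by (auto simp: decomp_set_def decomposable_def)
  obtain g' h' where n: "h' \<in> PP (degree h)" "degree g' = degree g" "pcompose g h = pcompose g' h'"
    using normalize_decomp[of h g] gh by auto
  have d: "d = degree g * degree h" using df gh by (simp add: degree_pcompose)
  have "degree h \<in> EE d" using gh by (auto simp: EE_def d)
  moreover have "f \<in> AA d (degree h)" using n gh by (auto simp: AA_def GG_def d intro!: image_eqI[of _ _ "(g', h')"])
  ultimately show "f \<in> (\<Union>e\<in>EE d. AA d e)" by blast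
qed

lemma AA_subset: "e \<in> EE d \<Longrightarrow> (AA d e :: 'a::field poly set) \<subseteq> decomp_set d"
proof
  fix f :: "'a poly" assume e: "e \<in> EE d" and "f \<in> AA d e"
  then obtain g h where "g \<in> GG (d div e)" "h \<in> PP e" "f = pcompose g h" by (auto simp: AA_def)
  then have A: "degree g = d div e" "degree h = e" "f = pcompose g h" by (auto simp: GG_def PP_def)
  have B: "2 \<le> e" "2 \<le> d div e" "e dvd d" using e by (auto simp: EE_def)
  have "degree f = d" using A B by (simp add: degree_pcompose)
  moreover have "decomposable f" unfolding decomposable_def using A B by (metis)
  ultimately show "f \<in> decomp_set d" by (simp add: decomp_set_def)
qed


lemma div_arith_aux:
  fixes l m :: nat
  assumes "l \<ge> 1" "m \<ge> 1"
  shows "(m - 1 - (m - 1) div l) * l \<le> l * m - m"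
proof -
  define k where "k = (m - 1) div l"
  define r where "r = (m - 1) mod l"
  have mr: "m - 1 = k * l + r" by (simp add: k_def r_def)
  have rl: "r < l" using assms by (simp add: r_def)
  obtain l' where l': "l = Suc l'" using assms by (cases l) auto
  have k1: "m - 1 - k = k * l' + r" using mr l' by simp
  have mm: "m = Suc (k + (r + k * l'))" using mr l' assms by simp
  have "(m - 1 - k) * l + m \<le> l * m"
  proof -
    have "(k * l' + r) * l + m = (k * l' + r) * Suc l' + Suc (k + (r + k * l'))" using l' mm by simp
    also have "\<dots> \<le> Suc l' * Suc (k + (r + k * l'))" using rl l' by (simp add: algebra_simps)
    also have "\<dots> = l * m" using l' mm by simp
    finally show ?thesis unfolding k1 .
  qed
  then show ?thesis unfolding k_def by linarith
qed

lemma inter_bound: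
  fixes l m d :: nat
  assumes l: "l \<ge> 1" and m: "m \<ge> 1" and tl: "of_nat l \<noteq> (0::'a::{finite,field})"
    and tm: "of_nat m \<noteq> (0::'a)" and d: "d = l * m"
  shows "card (AA d l \<inter> AA d m :: 'a poly set)
     \<le> CARD('a) ^ (l - 1) * CARD('a) ^ ((m - 1) div l) * CARD('a) ^ card {s. s \<le> d \<and> l dvd s \<and> m dvd s}"
proof -
  define k where "k = (m - 1) div l"
  define S' where "S' = {s. s \<le> d \<and> l dvd s \<and> m dvd s}"
  define I where "I = (AA d l \<inter> AA d m :: 'a poly set)"
  have dl: "d div l = m" and dm: "d div m = l" using l m d by auto
  have finS: "finite S'" by (auto simp: S'_def)
  define pr where "pr f = (SOME p. p \<in> GG m \<times> PP l \<and> f = pcompose (fst p) (snd p))" for f :: "'a poly"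
  have pr: "fst (pr f) \<in> GG m" "snd (pr f) \<in> PP l" "f = pcompose (fst (pr f)) (snd (pr f))" if "f \<in> I" for f
  proof -
    have "\<exists>p. p \<in> GG m \<times> PP l \<and> f = pcompose (fst p) (snd p)"
      using that by (auto simp: I_def AA_def dl)
    then have "pr f \<in> GG m \<times> PP l \<and> f = pcompose (fst (pr f)) (snd (pr f))"
      unfolding pr_def by (rule someI_ex)
    then show "fst (pr f) \<in> GG m" "snd (pr f) \<in> PP l" "f = pcompose (fst (pr f)) (snd (pr f))" by auto
  qed
  define \<Phi> where "\<Phi> f = (snd (pr f), restrict (\<lambda>i. coeff (fst (pr f)) (m - 1 - i) / lead_coeff (fst (pr f))) {..<k},
      restrict (coeff f) S')" for f
  have img: "\<Phi> ` I \<subseteq> PP l \<times> (Pi\<^sub>E {..<k} (\<lambda>_. UNIV :: 'a set)) \<times> (Pi\<^sub>E S' (\<lambda>_. UNIV :: 'a set))"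
  proof (rule image_subsetI)
    fix f assume "f \<in> I"
    then show "\<Phi> f \<in> PP l \<times> (Pi\<^sub>E {..<k} (\<lambda>_. UNIV :: 'a set)) \<times> (Pi\<^sub>E S' (\<lambda>_. UNIV :: 'a set))"
      using pr[of f] by (simp only: \<Phi>_def mem_Times_iff fst_conv snd_conv restrict_PiE_iff) simp
  qed
  have inj: "inj_on \<Phi> I"
  proof (rule inj_onI)
    fix f1 f2 assume f1: "f1 \<in> I" and f2: "f2 \<in> I" and eq: "\<Phi> f1 = \<Phi> f2"
    define G1 where "G1 = fst (pr f1)"
    define G2 where "G2 = fst (pr f2)"
    define H where "H = snd (pr f1)"
    have HH: "snd (pr f2) = H" using eq by (simp add: \<Phi>_def H_def)
    have G1: "G1 \<in> GG m" and G2: "G2 \<in> GG m" and H: "H \<in> PP l"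
      and fG1: "f1 = pcompose G1 H" and fG2: "f2 = pcompose G2 H"
      using pr[OF f1] pr[OF f2] HH by (auto simp: G1_def G2_def H_def)
    have eqc: "coeff f1 s = coeff f2 s" if "s \<in> S'" for s
      using fun_cong[OF arg_cong[where f = "\<lambda>x. snd (snd x)", OF eq], of s] that by (simp add: \<Phi>_def)
    have eqt: "coeff G1 (m - 1 - i) / lead_coeff G1 = coeff G2 (m - 1 - i) / lead_coeff G2" if "i < k" for i
      using fun_cong[OF arg_cong[where f = "\<lambda>x. fst (snd x)", OF eq], of i] that by (simp add: \<Phi>_def G1_def G2_def)
    have lf1: "lead_coeff f1 = lead_coeff G1" "degree f1 = m * l" using lead_comp_PP[OF H l, of G1] G1 fG1 by (auto simp: GG_def)
    have lf2: "lead_coeff f2 = lead_coeff G2" "degree f2 = m * l" using lead_comp_PP[OF H l, of G2] G2 fG2 by (auto simp: GG_def)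
    have "d \<in> S'" by (simp add: S'_def d)
    then have "coeff f1 d = coeff f2 d" by (rule eqc)
    then have cc: "lead_coeff G1 = lead_coeff G2" using lf1 lf2 d by (simp add: mult.commute)
    define c where "c = lead_coeff G1"
    have c0: "c \<noteq> 0" using G1 m by (auto simp: c_def GG_def)
    define u1 where "u1 = smult (inverse c) G1"
    define u2 where "u2 = smult (inverse c) G2"
    have du: "degree (u1 - u2) \<le> m - 1 - k"
    proof (rule degree_le, intro allI impI)
      fix j assume j: "m - 1 - k < j"
      show "coeff (u1 - u2) j = 0"
      proof (cases "j \<le> m - 1")
        case True
        define i where "i = m - 1 - j"
        have "i < k" "j = m - 1 - i" using True j by (auto simp: i_def)
        then show ?thesis using eqt[of i] cc c0 by (simp add: u1_def u2_def c_def field_simps)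
      next
        case False
        then have "j \<ge> m" by simp
        show ?thesis
        proof (cases "j = m")
          case True then show ?thesis using G1 G2 cc by (simp add: u1_def u2_def c_def GG_def)
        next
          case False
          then have "j > degree G1" "j > degree G2" using \<open>j \<ge> m\<close> G1 G2 by (auto simp: GG_def)
          then show ?thesis by (simp add: u1_def u2_def coeff_eq_0)
        qed
      qed
    qed
    have diff1: "smult (inverse c) (f1 - f2) = pcompose (u1 - u2) H"
      by (simp add: fG1 fG2 u1_def u2_def pcompose_diff pcompose_smult smult_diff_right)
    have "degree (smult (inverse c) (f1 - f2)) \<le> (m - 1 - k) * l"
      unfolding diff1 using du H by (simp add: degree_pcompose PP_def)
    also have "\<dots> \<le> l * m - m" unfolding k_def by (rule div_arith_aux[OF l m])
    finally have dsm: "degree (smult (inverse c) (f1 - f2)) \<le> l * m - m" .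
    obtain g1' h1' where g1': "g1' \<in> GG l" "h1' \<in> PP m" "f1 = pcompose g1' h1'"
      using f1 by (auto simp: I_def AA_def dm)
    obtain g2' h2' where g2': "g2' \<in> GG l" "h2' \<in> PP m" "f2 = pcompose g2' h2'"
      using f2 by (auto simp: I_def AA_def dm)
    have lg1: "lead_coeff g1' = c" using lead_comp_PP(1)[OF g1'(2) m, of g1'] g1'(3) lf1 by (simp add: c_def)
    have lg2: "lead_coeff g2' = c" using lead_comp_PP(1)[OF g2'(2) m, of g2'] g2'(3) lf2 cc by (simp add: c_def)
    define v1 where "v1 = smult (inverse c) g1'"
    define v2 where "v2 = smult (inverse c) g2'"
    have v: "lead_coeff v1 = 1" "degree v1 = l" "lead_coeff v2 = 1" "degree v2 = l"
      using lg1 lg2 c0 g1' g2' by (auto simp: v1_def v2_def GG_def)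
    have "pcompose v1 h1' - pcompose v2 h2' = smult (inverse c) (f1 - f2)"
      by (simp add: v1_def v2_def g1'(3) g2'(3) pcompose_smult smult_diff_right)
    then have "degree (pcompose v1 h1' - pcompose v2 h2') \<le> l * m - m" using dsm by simp
    from approx_root[OF v l tl g1'(2) g2'(2) m this] have hh: "h1' = h2'" .
    show "f1 = f2"
    proof (rule ccontr)
      assume ne: "f1 \<noteq> f2"
      define s where "s = degree (f1 - f2)"
      have s1: "s = degree (G1 - G2) * l"
        using H by (simp add: s_def fG1 fG2 pcompose_diff[symmetric] degree_pcompose PP_def)
      have s2: "s = degree (g1' - g2') * m"
        using g1' hh by (simp add: s_def g1'(3) g2'(3) pcompose_diff[symmetric] degree_pcompose PP_def)
      have "s \<le> d" using lf1 lf2 d unfolding s_def by (metis degree_diff_le mult.commute order_refl)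
      moreover have "l dvd s" by (simp add: s1)
      moreover have "m dvd s" by (simp add: s2)
      ultimately have "s \<in> S'" by (simp add: S'_def)
      then have "coeff (f1 - f2) s = 0" using eqc by simp
      moreover have "coeff (f1 - f2) s \<noteq> 0" using ne unfolding s_def by (metis diff_eq_diff_eq diff_self leading_coeff_0_iff)
      ultimately show False by simp
    qed
  qed
  have "card I \<le> card ((PP l :: 'a poly set) \<times> (Pi\<^sub>E {..<k} (\<lambda>_. UNIV :: 'a set)) \<times> (Pi\<^sub>E S' (\<lambda>_. UNIV :: 'a set)))"
  proof -
    have "finite ((PP l :: 'a poly set) \<times> (Pi\<^sub>E {..<k} (\<lambda>_. UNIV :: 'a set)) \<times> (Pi\<^sub>E S' (\<lambda>_. UNIV :: 'a set)))"
      by (intro finite_cartesian_product finite_PiE finS) (auto simp: finite_PP)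
    then show ?thesis using card_inj_on_le[OF inj img] by simp
  qed
  also have "\<dots> = CARD('a) ^ (l - 1) * CARD('a) ^ k * CARD('a) ^ card S'"
    using l finS by (simp add: card_cartesian_product card_PP card_PiE)
  finally show ?thesis by (simp add: I_def k_def S'_def)
qed


lemma mpf:
  assumes "d \<ge> (2::nat)"
  shows "prime (min_prime_factor d)" "min_prime_factor d dvd d"
    "\<And>p. prime p \<Longrightarrow> p dvd d \<Longrightarrow> min_prime_factor d \<le> p"
proof -
  define S where "S = {l::nat. prime l \<and> l dvd d}"
  have fin: "finite S" by (rule finite_subset[of _ "{..d}"]) (use assms in \<open>auto simp: S_def dest: dvd_imp_le\<close>)
  obtain p where "prime p" "p dvd d" using prime_factor_nat[of d] assms by auto
  then have ne: "S \<noteq> {}" by (auto simp: S_def)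
  have "Min S \<in> S" using fin ne by (rule Min_in)
  then show "prime (min_prime_factor d)" "min_prime_factor d dvd d" by (auto simp: S_def min_prime_factor_def)
  show "\<And>p. prime p \<Longrightarrow> p dvd d \<Longrightarrow> min_prime_factor d \<le> p"
    using fin by (auto simp: S_def min_prime_factor_def intro!: Min_le)
qed

lemma mpf_le:
  assumes "d \<ge> (2::nat)" "t \<ge> 2" "t dvd d"
  shows "min_prime_factor d \<le> t"
proof -
  obtain p where p: "prime p" "p dvd t" using prime_factor_nat[of t] assms by auto
  have "p \<le> t" using p assms by (auto intro: dvd_imp_le)
  moreover have "p dvd d" using p assms dvd_trans by blast
  ultimately show ?thesis using mpf(3)[OF assms(1) p(1)] by simp
qed


lemma EE_prime: "prime d \<Longrightarrow> EE d = {}"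
  by (auto simp: EE_def prime_nat_iff)

lemma prime_iff_mpf:
  assumes "d \<ge> 2" shows "prime d \<longleftrightarrow> d = min_prime_factor d"
proof
  assume "prime d"
  moreover have "min_prime_factor d dvd d" "min_prime_factor d \<noteq> 1"
    using mpf[OF assms] by auto
  ultimately show "d = min_prime_factor d" by (auto simp: prime_nat_iff)
next
  assume "d = min_prime_factor d"
  then show "prime d" using mpf(1)[OF assms] by simp
qed

lemma EE_sq:
  assumes "d \<ge> 2" "d = min_prime_factor d ^ 2"
  shows "EE d = {min_prime_factor d}"
proof -
  let ?l = "min_prime_factor d"
  have l2: "?l \<ge> 2" using mpf[OF assms(1)] prime_ge_2_nat by blast
  show ?thesis
  proof (intro set_eqI iffI)
    fix e assume e: "e \<in> EE d"
    then have e1: "e dvd d" "2 \<le> e" "2 \<le> d div e" by (auto simp: EE_def)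
    have "?l \<le> e" using mpf_le[OF assms(1) e1(2,1)] .
    moreover have "?l \<le> d div e" using mpf_le[OF assms(1) e1(3)] e1(1) by (metis dvd_div_mult_self dvd_triv_left)
    moreover have "e * (d div e) = ?l * ?l" using e1 assms(2) by (simp add: power2_eq_square)
    moreover have "\<not> ?l < e"
    proof
      assume "?l < e"
      then have "?l * (d div e) < e * (d div e)" using \<open>?l \<le> d div e\<close> l2 by simp
      moreover have "?l * ?l \<le> ?l * (d div e)" using \<open>?l \<le> d div e\<close> by simp
      ultimately show False using \<open>e * (d div e) = ?l * ?l\<close> by linarith
    qed
    ultimately show "e \<in> {?l}" by simp
  next
    fix e assume "e \<in> {?l}"
    then have e: "e = ?l" by simp
    obtain l where l: "l = ?l" by simp
    have dl: "d = l * l" using assms(2) l by (simp add: power2_eq_square)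
    have "l \<ge> 2" using l2 l by simp
    have el: "e = l" using e l by simp
    have "l dvd d" unfolding dl by simp
    moreover have "d div l = l" unfolding dl using \<open>l \<ge> 2\<close> by simp
    ultimately have "e dvd d \<and> 2 \<le> e \<and> 2 \<le> d div e" using el \<open>l \<ge> 2\<close> by simp
    then show "e \<in> EE d" by (simp add: EE_def)
  qed
qed


lemma le_of_dvd_min:
  fixes l d t :: nat
  assumes H: "\<forall>p. prime p \<longrightarrow> p dvd d \<longrightarrow> l \<le> p" and "t \<ge> 2" "t dvd d"
  shows "l \<le> t"
proof -
  obtain p where p: "prime p" "p dvd t" using prime_factor_nat[of t] assms by auto
  have "p \<le> t" using p assms by (auto intro: dvd_imp_le)
  moreover have "p dvd d" using p assms dvd_trans by blast
  moreover have "l \<le> p" using H p(1) \<open>p dvd d\<close> by blast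
  ultimately show ?thesis by linarith
qed

lemma m_big:
  fixes l m d e :: nat
  assumes l: "prime l" and d: "d = l * m" and H: "\<forall>p. prime p \<longrightarrow> p dvd d \<longrightarrow> l \<le> p"
    and e: "e dvd d" "l < e" "l < d div e"
  shows "m \<ge> l * (l + 1)"
proof -
  define e' where "e' = d div e"
  have l2: "l \<ge> 2" using l prime_ge_2_nat by blast
  have ee: "e * e' = l * m" using e d by (simp add: e'_def)
  have e'd: "e' dvd d" unfolding e'_def by (rule dvdI[of _ _ e]) (use e in simp)
  have "l dvd e * e'" using ee by simp
  then have "l dvd e \<or> l dvd e'" using l prime_dvd_mult_nat by blast
  then show ?thesis
  proof
    assume "l dvd e'"
    then obtain t where t: "e' = l * t" by (auto elim: dvdE)
    have "l * 1 < l * t" using t e by (simp add: e'_def)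
    then have "t \<ge> 2" by simp
    moreover have "t dvd d" using t e'd dvd_trans[of t e' d] by simp
    ultimately have lt: "l \<le> t" using le_of_dvd_min[OF H] by blast
    have "l * (e * t) = l * m" using ee t by (simp add: algebra_simps)
    then have "e * t = m" using l2 by simp
    moreover have "(l + 1) * l \<le> e * t" using lt e(2) by (intro mult_le_mono) auto
    ultimately show ?thesis by (simp add: mult.commute)
  next
    assume "l dvd e"
    then obtain t where t: "e = l * t" by (auto elim: dvdE)
    have "l * 1 < l * t" using t e by simp
    then have "t \<ge> 2" by simp
    moreover have "t dvd d" using t e dvd_trans[of t e d] by simp
    ultimately have lt: "l \<le> t" using le_of_dvd_min[OF H] by blast
    have "l * (t * e') = l * m" using ee t by (simp add: algebra_simps)
    then have "t * e' = m" using l2 by simp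
    moreover have "l < e'" using e by (simp add: e'_def)
    moreover have "l * (l + 1) \<le> t * e'" using lt \<open>l < e'\<close> by (intro mult_le_mono) auto
    ultimately show ?thesis by simp
  qed
qed


lemma EE_gen:
  fixes l m d :: nat
  assumes l: "prime l" and d: "d = l * m" and H: "\<forall>p. prime p \<longrightarrow> p dvd d \<longrightarrow> l \<le> p"
    and m: "m \<ge> 2" "m \<noteq> l"
  shows "EE d = insert l (insert m {e. e dvd d \<and> l < e \<and> l < d div e})" "l < m"
proof -
  have l2: "l \<ge> 2" using l prime_ge_2_nat by blast
  have "m dvd d" using d by simp
  then have "l \<le> m" using le_of_dvd_min[OF H m(1)] by blast
  then show lm: "l < m" using m by simp
  show "EE d = insert l (insert m {e. e dvd d \<and> l < e \<and> l < d div e})"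
  proof (intro set_eqI iffI)
    fix e assume "e \<in> EE d"
    then have e: "e dvd d" "2 \<le> e" "2 \<le> d div e" by (auto simp: EE_def)
    have le1: "l \<le> e" using le_of_dvd_min[OF H e(2,1)] .
    have "d div e dvd d" by (rule dvdI[of _ _ e]) (use e in simp)
    then have le2: "l \<le> d div e" using le_of_dvd_min[OF H e(3)] by blast
    have ed: "e * (d div e) = d" using e by simp
    show "e \<in> insert l (insert m {e. e dvd d \<and> l < e \<and> l < d div e})"
    proof (cases "e = l")
      case False
      show ?thesis
      proof (cases "d div e = l")
        case True
        then have "l * e = l * m" using ed d by (simp add: mult.commute)
        then have "e = m" using l2 by simp
        then show ?thesis by simp
      next
        case False
        then show ?thesis using le1 le2 \<open>e \<noteq> l\<close> e by auto
      qed
    qed simp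
  next
    fix e assume "e \<in> insert l (insert m {e. e dvd d \<and> l < e \<and> l < d div e})"
    then consider "e = l" | "e = m" | "e dvd d" "l < e" "l < d div e" by auto
    then show "e \<in> EE d"
    proof cases
      case 1 then show ?thesis using l2 m d by (simp add: EE_def)
    next
      case 2 then show ?thesis using l2 m d by (simp add: EE_def)
    next
      case 3 then show ?thesis using l2 by (simp add: EE_def)
    qed
  qed
qed

lemma exc_cases:
  fixes l m e e' :: nat
  assumes ex: "(l = 2 \<and> 6 \<le> m \<and> m \<le> 13 \<and> m \<noteq> 12) \<or> (l = 3 \<and> 12 \<le> m \<and> m \<le> 17 \<and> odd m)"
    and e: "e dvd l * m" "l < e" "e * e \<le> l * m"
    and e': "e' dvd l * m" "l < e'" "e' * e' \<le> l * m"
  shows "e = e' \<and> 3*l*(e-l)*e + m*e \<le> 3*l*m*(e-l)"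
proof -
  have "l * m \<le> 51" using ex by auto
  then have "e * e \<le> 51" "e' * e' \<le> 51" using e e' by linarith+
  moreover have "x \<le> 7" if "x * x \<le> 51" for x :: nat
  proof (rule ccontr)
    assume "\<not> x \<le> 7"
    then have "8 * 8 \<le> x * x" by (intro mult_le_mono) auto
    with that show False by simp
  qed
  ultimately have "e \<le> 7" "e' \<le> 7" by auto
  then have he: "e = 3 \<or> e = 4 \<or> e = 5 \<or> e = 6 \<or> e = 7" and he': "e' = 3 \<or> e' = 4 \<or> e' = 5 \<or> e' = 6 \<or> e' = 7"
    using e(2) e'(2) ex by arith+
  from ex have hm: "(l = 2 \<and> (m = 6 \<or> m = 7 \<or> m = 8 \<or> m = 9 \<or> m = 10 \<or> m = 11 \<or> m = 13)) \<or>
     (l = 3 \<and> (m = 13 \<or> m = 15 \<or> m = 17))" by presburger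
  show ?thesis using hm he he' e e' by (elim disjE conjE) simp_all
qed


lemma exp_bound:
  fixes q l m e s :: nat
  assumes q: "q \<ge> 2" and l: "l \<ge> 1" and e: "l < e" "e dvd l * m"
    and ineq: "3*real l*real (e-l)*real e*real s + 3*real l*real (e-l)*real e + real m*real e \<le> 3*real l*real m*real (e-l)"
  shows "real q ^ (e + (l*m) div e) \<le> real q powr (real l + real m - real m/(3*real l)) * (1/2)^(s*(e-l))"
proof -
  define L where "L = real l"
  define M where "M = real m"
  define Ee where "Ee = real e"
  define J where "J = real (e - l)"
  define R where "R = L + M - M/(3*L)"
  have L0: "L > 0" using l by (simp add: L_def)
  have E0: "Ee > 0" using e by (simp add: Ee_def)
  have J: "J = Ee - L" using e by (simp add: J_def Ee_def L_def)
  have x: "real (e + (l*m) div e) = Ee + L*M/Ee" using e by (simp add: Ee_def L_def M_def real_of_nat_div)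
  have ineq': "3*L*J*Ee*real s + 3*L*J*Ee + M*Ee \<le> 3*L*M*J" using ineq by (simp add: L_def J_def Ee_def M_def)
  have id: "R - (Ee + L*M/Ee + real s * J) = (3*L*M*J - (3*L*J*Ee*real s + 3*L*J*Ee + M*Ee)) / (3*L*Ee)"
    using L0 E0 unfolding R_def J by (simp add: field_simps)
  have "(3*L*M*J - (3*L*J*Ee*real s + 3*L*J*Ee + M*Ee)) / (3*L*Ee) \<ge> 0"
    using ineq' L0 E0 by (intro divide_nonneg_pos) auto
  then have xb: "Ee + L*M/Ee \<le> R - real s * J" using id by linarith
  have qpos: "real q > 0" using q by simp
  have "real q ^ (e + (l*m) div e) = real q powr (real (e + (l*m) div e))" by (rule powr_realpow[OF qpos, symmetric])
  also have "\<dots> \<le> real q powr (R - real s * J)" unfolding x using q xb by (intro powr_mono) auto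
  also have "\<dots> = real q powr R / real q powr (real (s*(e-l)))" by (simp add: powr_diff J_def)
  also have "\<dots> = real q powr R / real q ^ (s*(e-l))" by (subst powr_realpow[OF qpos]) (rule refl)
  also have "\<dots> = real q powr R * (1 / real q) ^ (s * (e - l))" by (simp add: power_one_over divide_inverse power_inverse)
  also have "\<dots> \<le> real q powr R * (1/2) ^ (s * (e - l))"
    using q by (intro mult_left_mono power_mono) (auto simp: divide_simps)
  finally show ?thesis by (simp add: R_def L_def M_def)
qed

lemma half_sum:
  fixes S :: "nat set" and l :: nat
  assumes "finite S" "\<forall>e\<in>S. l < e"
  shows "(\<Sum>e\<in>S. (1/2::real) ^ (e - l)) \<le> 1"
proof -
  have gen: "(\<Sum>e\<in>S. (1/2::real) ^ (e - l)) \<le> 1 - (1/2)^N" if "S \<subseteq> {l<..l+N}" for S N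
    using that
  proof (induction N arbitrary: S)
    case 0 then have "S = {}" by auto
    then show ?case by simp
  next
    case (Suc N)
    have fin: "finite S" using Suc.prems finite_subset by blast
    have sub: "S - {l + Suc N} \<subseteq> {l<..l+N}" using Suc.prems by auto
    have "(\<Sum>e\<in>S. (1/2::real) ^ (e - l)) \<le> (\<Sum>e\<in>S - {l + Suc N}. (1/2::real) ^ (e - l)) + (1/2)^(Suc N)"
    proof (cases "l + Suc N \<in> S")
      case True
      then show ?thesis using fin by (simp add: sum.remove)
    next
      case False then show ?thesis by simp
    qed
    also have "\<dots> \<le> 1 - (1/2)^N + (1/2)^Suc N" using Suc.IH[OF sub] by simp
    also have "\<dots> = 1 - (1/2)^Suc N" by simp
    finally show ?case .
  qed
  obtain N where "S \<subseteq> {l<..l+N}"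
  proof
    show "S \<subseteq> {l<..l + (if S = {} then 0 else Max S)}"
      using assms by (auto simp: Max_ge_iff) (meson Max_ge add.commute trans_le_add2)
  qed
  from gen[OF this] show ?thesis using zero_le_power[of "1/2::real" N] by linarith
qed


lemma poly_l2:
  fixes m j :: nat
  assumes "j \<ge> 1" "(2+j)*(2+j) \<le> 2*m" "m = 12 \<or> m \<ge> 14"
  shows "6*2*real j*(2+real j) + real m*(2+real j) \<le> 3*2*real m*real j"
proof -
  have m12: "real m \<ge> 12" using assms(3) by auto
  consider "j = 1" | "j = 2" | "j = 3" | "j \<ge> 4" using assms by linarith
  then show ?thesis
  proof cases
    case 1 then show ?thesis using m12 by simp
  next
    case 2 then show ?thesis using m12 by simp
  next
    case 3
    then have "m \<noteq> 12" using assms(2) by auto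
    then have "real m \<ge> 14" using assms(3) by auto
    then show ?thesis using 3 by simp
  next
    case 4
    have m0: "real ((2+j)*(2+j)) \<le> real (2*m)" using assms(2) by (simp only: of_nat_le_iff)
    have m: "(2+real j)*(2+real j) \<le> 2*real m" using m0 by (simp add: algebra_simps)
    have a: "real j * (5*real j - 16) \<ge> 4 * 4" using 4 by (intro mult_mono) auto
    have b: "2*real m*(5*real j - 2) \<ge> (2+real j)*(2+real j)*(5*real j - 2)"
      using m 4 by (intro mult_right_mono) auto
    have c: "(2+real j)*(real j * (5*real j - 16) - 4) \<ge> 0" using a by simp
    show ?thesis using b c by (simp add: algebra_simps)
  qed
qed

lemma poly_l3:
  fixes m j :: nat
  assumes "j \<ge> 1" "(3+j)*(3+j) \<le> 3*m" "m \<ge> 18"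
  shows "6*3*real j*(3+real j) + real m*(3+real j) \<le> 3*3*real m*real j"
proof -
  consider "j = 1" | "j = 2" | "j = 3" | "j = 4" | "j \<ge> 5" using assms by linarith
  then show ?thesis
  proof cases
    case 5
    have m0: "real ((3+j)*(3+j)) \<le> real (3*m)" using assms(2) by (simp only: of_nat_le_iff)
    have m: "(3+real j)*(3+real j) \<le> 3*real m" using m0 by (simp add: algebra_simps)
    have a: "real j * (8*real j - 33) \<ge> 5 * 7" using 5 by (intro mult_mono) auto
    have b: "3*real m*(8*real j - 3) \<ge> (3+real j)*(3+real j)*(8*real j - 3)"
      using m 5 by (intro mult_right_mono) auto
    have c: "(3+real j)*(real j * (8*real j - 33) - 9) \<ge> 0" using a by simp
    show ?thesis using b c by (simp add: algebra_simps)
  qed (use assms in auto)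
qed


lemma poly_l5:
  fixes l m j :: nat
  assumes l: "l \<ge> 5" and j: "j \<ge> 1" and lm: "(l+j)*(l+j) \<le> l*m" and m: "m \<ge> l*(l+1)"
  shows "6*real l*real j*(real l+real j) + real m*(real l+real j) \<le> 3*real l*real m*real j"
proof -
  define L where "L = real l"
  define J where "J = real j"
  define M where "M = real m"
  have L5: "L \<ge> 5" and J1: "J \<ge> 1" using l j by (auto simp: L_def J_def)
  have LM0: "real ((l+j)*(l+j)) \<le> real (l*m)" using lm by (simp only: of_nat_le_iff)
  have LM: "(L+J)*(L+J) \<le> L*M" using LM0 unfolding L_def J_def M_def by simp
  have M0: "real (l*(l+1)) \<le> real m" using m by (simp only: of_nat_le_iff)
  have M: "M \<ge> L*(L+1)" using M0 unfolding L_def M_def by (simp add: algebra_simps)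
  have pos: "3*L*J - L - J \<ge> 0"
  proof -
    have a: "L \<le> L*J" using mult_left_mono[of 1 J L] J1 L5 by simp
    have b: "5*J \<le> L*J" using J1 L5 by (intro mult_right_mono) auto
    have "3*(L*J) - L - J \<ge> 0" using a b L5 J1 by linarith
    then show ?thesis by (simp add: mult.assoc)
  qed
  have "6*L*J*(L+J) + M*(L+J) \<le> 3*L*M*J"
  proof (cases "2*j \<le> 3*l")
    case True
    then have J2: "2*J \<le> 3*L" unfolding J_def L_def by linarith
    have key: "(L+1)*(3*L*J - L - J) \<ge> 6*J*(L+J)"
    proof (cases "l \<ge> 8")
      case True
      then have L8: "L \<ge> 8" by (simp add: L_def)
      have c1: "3*L*L - 13*L - 1 \<ge> 0"
      proof -
        have "L*L \<ge> 8*L" using L8 by (intro mult_right_mono) auto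
        then show ?thesis using L8 by linarith
      qed
      have c2: "3*L*L - 4*L - 1 - 6*J \<ge> 3*L*L - 13*L - 1" using J2 by linarith
      have "J*(3*L*L - 4*L - 1 - 6*J) \<ge> 1*(3*L*L - 13*L - 1)"
        using c1 c2 J1 by (intro mult_mono) auto
      moreover have "2*L*L - 14*L - 1 \<ge> 0"
      proof -
        have "L*L \<ge> 8*L" using L8 by (intro mult_right_mono) auto
        then show ?thesis using L8 by linarith
      qed
      ultimately show ?thesis by (simp add: algebra_simps)
    next
      case False
      then have "l \<le> 7" by simp
      moreover have "j \<le> 10" using True \<open>l \<le> 7\<close> by linarith
      ultimately have hl: "l = 5 \<or> l = 6 \<or> l = 7" and hj: "j = 1 \<or> j = 2 \<or> j = 3 \<or> j = 4 \<or> j = 5 \<or> j = 6 \<or> j = 7 \<or> j = 8 \<or> j = 9 \<or> j = 10"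
        using l j by arith+
      show ?thesis using hl hj True unfolding L_def J_def
        by (elim disjE) simp_all
    qed
    have "M*(3*L*J - L - J) \<ge> L*(L+1)*(3*L*J - L - J)" using M pos by (intro mult_right_mono) auto
    moreover have "L*(6*J*(L+J)) \<le> L*((L+1)*(3*L*J - L - J))" using key L5 by (intro mult_left_mono) auto
    moreover have "L*(L+1)*(3*L*J - L - J) = L*((L+1)*(3*L*J - L - J))" by (simp add: mult.assoc)
    moreover have "L*(6*J*(L+J)) = 6*L*J*(L+J)" by (simp add: algebra_simps)
    moreover have "3*L*M*J - (6*L*J*(L+J) + M*(L+J)) = M*(3*L*J - L - J) - 6*L*J*(L+J)" by (simp add: algebra_simps)
    ultimately show ?thesis by linarith
  next
    case False
    then have J2: "2*J \<ge> 3*L" unfolding J_def L_def by linarith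
    have a: "3*(J - L) \<ge> J" using J2 by (simp add: algebra_simps)
    have b: "3*L*J*(J-L) \<ge> L*J*J"
    proof -
      have "(L*J)*(3*(J-L)) \<ge> (L*J)*J" using a L5 J1 by (intro mult_left_mono) auto
      then show ?thesis by (simp add: algebra_simps)
    qed
    have c0: "L*(J*J) \<ge> 3*(J*J)" using L5 by (intro mult_right_mono) auto
    have c: "L*J*J \<ge> 3*(J*J)" using c0 by (simp add: mult.assoc)
    have d: "3*(L+J) \<le> 5*J" using J2 by (simp add: algebra_simps)
    have e: "9*((L+J)*(L+J)) \<le> 25*(J*J)"
    proof -
      have "(3*(L+J))*(3*(L+J)) \<le> (5*J)*(5*J)" by (rule mult_mono[OF d d]) (use L5 J1 in \<open>simp_all add: algebra_simps\<close>)
      then show ?thesis by (simp add: algebra_simps)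
    qed
    have f: "3*L*J*(J-L) \<ge> (L+J)*(L+J)" using b c e zero_le_square[of J] by linarith
    have g: "(L+J)*(3*L*J - L - J) \<ge> 6*L*L*J" using f by (simp add: algebra_simps)
    have "L*M*(3*L*J - L - J) \<ge> (L+J)*(L+J)*(3*L*J - L - J)" using LM pos by (intro mult_right_mono) auto
    moreover have "(L+J)*(L+J)*(3*L*J - L - J) \<ge> (L+J)*(6*L*L*J)"
      using g L5 J1 by (simp add: mult.assoc mult_left_mono)
    ultimately have "L*(M*(3*L*J - L - J)) \<ge> L*(6*L*J*(L+J))" by (simp add: algebra_simps)
    then have "M*(3*L*J - L - J) \<ge> 6*L*J*(L+J)" using L5 by (simp add: mult_le_cancel_left_pos)
    then show ?thesis by (simp add: algebra_simps)
  qed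
  then show ?thesis by (simp add: L_def J_def M_def)
qed



lemma N1':
  fixes l m q :: nat
  assumes l: "prime l" and H: "\<forall>p. prime p \<longrightarrow> p dvd l*m \<longrightarrow> l \<le> p" and q: "q \<ge> 2"
  shows "(\<Sum>e\<in>{e. e dvd l*m \<and> l < e \<and> l < (l*m) div e}. real q ^ (e + (l*m) div e))
     \<le> 2 * real q powr (real l + real m - real m/(3*real l))"
proof -
  define d where "d = l * m"
  define E' where "E' = {e. e dvd d \<and> l < e \<and> l < d div e}"
  define T where "T = real q powr (real l + real m - real m/(3*real l))"
  define t where "t e = real q ^ (e + d div e)" for e
  have T0: "T \<ge> 0" by (simp add: T_def)
  have l2: "l \<ge> 2" using l prime_ge_2_nat by blast
  have tpos: "t e \<ge> 0" for e by (simp add: t_def)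
  show ?thesis
  proof (cases "E' = {}")
    case True
    then have emp: "{e. e dvd l*m \<and> l < e \<and> l < (l*m) div e} = {}" by (simp add: E'_def d_def)
    show ?thesis unfolding emp using T0 by (simp add: T_def)
  next
    case False
    then obtain e0 where "e0 \<in> E'" by blast
    then have mb: "m \<ge> l * (l + 1)" using m_big[OF l d_def] H by (auto simp: E'_def d_def)
    then have d0: "d > 0" using l2 by (simp add: d_def)
    have finE: "finite E'" by (rule finite_subset[of _ "{..d}"]) (use d0 in \<open>auto simp: E'_def dest: dvd_imp_le\<close>)
    define E1 where "E1 = {e\<in>E'. e * e \<le> d}"
    define E2 where "E2 = {e\<in>E'. \<not> e * e \<le> d}"
    have fin1: "finite E1" and fin2: "finite E2" using finE by (auto simp: E1_def E2_def)
    have split: "E' = E1 \<union> E2" "E1 \<inter> E2 = {}" by (auto simp: E1_def E2_def)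
    have sum_split: "sum t E' = sum t E1 + sum t E2" using fin1 fin2 split by (simp add: sum.union_disjoint)
    have E2le: "sum t E2 \<le> sum t E1"
    proof -
      define \<phi> where "\<phi> e = d div e" for e
      have inj: "inj_on \<phi> E2"
      proof (rule inj_onI)
        fix x y assume "x \<in> E2" "y \<in> E2" "\<phi> x = \<phi> y"
        then have "x dvd d" "y dvd d" "d div x = d div y" by (auto simp: E2_def E'_def \<phi>_def)
        then show "x = y" using d0 by (metis dvd_mult_div_cancel nonzero_mult_div_cancel_right div_mult_self1_is_m dvd_div_mult_self gr_implies_not0 mult_is_0)
      qed
      have img: "\<phi> ` E2 \<subseteq> E1"
      proof
        fix y assume "y \<in> \<phi> ` E2"
        then obtain x where x: "x \<in> E2" "y = d div x" by (auto simp: \<phi>_def)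
        then have xd: "x dvd d" "l < x" "l < d div x" "\<not> x * x \<le> d" by (auto simp: E2_def E'_def)
        have xy: "x * y = d" using xd x by simp
        have yd: "y dvd d" using xy by (metis dvd_triv_right)
        have "d div y = x" using xy d0 by (metis nonzero_mult_div_cancel_right mult.commute mult_is_0 gr_implies_not0)
        moreover have "y < x"
        proof (rule ccontr)
          assume "\<not> y < x" then have "x * x \<le> x * y" by simp
          then show False using xy xd by simp
        qed
        then have "y * y \<le> d" using xy by (metis less_imp_le_nat mult_le_mono1)
        ultimately show "y \<in> E1" using yd xd x by (auto simp: E1_def E'_def)
      qed
      have teq: "t (\<phi> e) = t e" if "e \<in> E2" for e
      proof -
        have "e dvd d" using that by (auto simp: E2_def E'_def)
        then have "d div (d div e) = e" using d0 by (metis dvd_mult_div_cancel nonzero_mult_div_cancel_right mult_is_0 gr_implies_not0)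
        then show ?thesis by (simp add: t_def \<phi>_def add.commute)
      qed
      have "sum t E2 = sum (t \<circ> \<phi>) E2" using teq by (intro sum.cong) auto
      also have "\<dots> = sum t (\<phi> ` E2)" using inj by (simp add: sum.reindex)
      also have "\<dots> \<le> sum t E1" using img fin1 tpos by (intro sum_mono2) auto
      finally show ?thesis .
    qed
    have E1pr: "e dvd l * m" "l < e" "e * e \<le> l * m" if "e \<in> E1" for e
      using that by (auto simp: E1_def E'_def d_def)
    have E1le: "sum t E1 \<le> T"
    proof (cases "(l = 2 \<and> 6 \<le> m \<and> m \<le> 13 \<and> m \<noteq> 12) \<or> (l = 3 \<and> 12 \<le> m \<and> m \<le> 17 \<and> odd m)")
      case True
      show ?thesis
      proof (cases "E1 = {}")
        case True then show ?thesis using T0 by simp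
      next
        case False
        then obtain e1 where e1: "e1 \<in> E1" by blast
        have uni: "E1 = {e1}"
        proof
          show "E1 \<subseteq> {e1}"
          proof
            fix x assume x: "x \<in> E1"
            show "x \<in> {e1}" using exc_cases[OF True E1pr[OF x] E1pr[OF e1]] by simp
          qed
        qed (use e1 in auto)
        have "3*l*(e1-l)*e1 + m*e1 \<le> 3*l*m*(e1-l)"
          using exc_cases[OF True E1pr[OF e1] E1pr[OF e1]] by simp
        then have "real (3*l*(e1-l)*e1 + m*e1) \<le> real (3*l*m*(e1-l))" by (simp only: of_nat_le_iff)
        then have ineq: "3*real l*real (e1-l)*real e1*real (0::nat) + 3*real l*real (e1-l)*real e1 + real m*real e1 \<le> 3*real l*real m*real (e1-l)"
          by (simp only: of_nat_mult of_nat_add of_nat_numeral of_nat_0 mult_zero_right add_0)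
        have "t e1 \<le> T * (1/2)^(0*(e1-l))"
          using exp_bound[OF q _ _ _ ineq] l2 E1pr[OF e1] by (simp add: t_def T_def d_def)
        then show ?thesis using uni by simp
      qed
    next
      case False
      have each: "t e \<le> T * (1/2)^(e - l)" if "e \<in> E1" for e
      proof -
        note ep = E1pr[OF that]
        define j where "j = e - l"
        have j1: "j \<ge> 1" and ej: "e = l + j" using ep by (auto simp: j_def)
        have lj: "(l+j)*(l+j) \<le> l*m" using ep ej by simp
        have key: "6*real l*real j*(real l+real j) + real m*(real l+real j) \<le> 3*real l*real m*real j"
        proof -
          consider "l = 2" | "l = 3" | "l \<ge> 5"
          proof -
            have "l \<noteq> 4"
            proof
              assume "l = 4"
              then have "prime (4::nat)" using l by simp
              then have "\<forall>x. x dvd (4::nat) \<longrightarrow> x = 1 \<or> x = 4" by (simp add: prime_nat_iff)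
              from spec[OF this, of 2] show False by simp
            qed
            then show ?thesis using l2 that by linarith
          qed
          then show ?thesis
          proof cases
            case 1
            then have "m = 12 \<or> m \<ge> 14" using False mb by auto
            then show ?thesis using poly_l2[OF j1 _ ] lj 1 by simp
          next
            case 2
            have "\<not> 2 dvd l * m"
            proof
              assume "2 dvd l * m"
              then have "l \<le> 2" using H two_is_prime_nat by blast
              then show False using 2 by simp
            qed
            then have "odd m" using 2 by simp
            then have "m \<ge> 18" using False mb 2 by auto
            then show ?thesis using poly_l3[OF j1 _ ] lj 2 by simp
          next
            case 3
            then show ?thesis using poly_l5[OF 3 j1 lj mb] by simp
          qed
        qed
        have ineq: "3*real l*real (e-l)*real e*real (1::nat) + 3*real l*real (e-l)*real e + real m*real e \<le> 3*real l*real m*real (e-l)"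
          using key unfolding j_def[symmetric] ej by (simp add: algebra_simps)
        have "t e \<le> T * (1/2)^(1*(e-l))"
          using exp_bound[OF q _ _ _ ineq] l2 ep by (simp add: t_def T_def d_def)
        then show ?thesis by simp
      qed
      have "sum t E1 \<le> (\<Sum>e\<in>E1. T * (1/2)^(e - l))" using each by (rule sum_mono)
      also have "\<dots> = T * (\<Sum>e\<in>E1. (1/2)^(e - l))" by (simp add: sum_distrib_left)
      also have "\<dots> \<le> T * 1" using half_sum[OF fin1] E1pr T0 by (intro mult_left_mono) auto
      finally show ?thesis by simp
    qed
    have "sum t E' \<le> 2 * T" using sum_split E2le E1le by linarith
    then show ?thesis by (simp add: t_def T_def E'_def d_def)
  qed
qed


lemma cval:
  fixes q k e :: nat
  assumes "q \<ge> 1" "e \<ge> 1"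
  shows "real ((q^(Suc k) - q^k) * q^(e-1)) = real q ^ (k+e) * (1 - 1/real q)"
proof -
  have le: "q^k \<le> q^Suc k" using assms by simp
  have "real ((q^(Suc k) - q^k) * q^(e-1)) = (real q ^ Suc k - real q ^ k) * real q ^ (e - 1)"
    using le by (simp add: of_nat_diff)
  also have "\<dots> = real q ^ (k + e) * (1 - 1/real q)"
  proof -
    obtain e' where e: "e = Suc e'" using assms by (cases e) auto
    have q0: "real q \<noteq> 0" using assms by simp
    show ?thesis unfolding e using assms by (simp add: field_simps q0 power_add)
  qed
  finally show ?thesis .
qed

lemma N2:
  fixes l m :: nat
  assumes l: "l \<ge> 2" and m: "l < m"
  shows "real ((m - 1) div l) + real (if l dvd m then l else 1) + real m / (3 * real l) \<le> real m"
proof (cases "l dvd m")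
  case True
  then obtain t where t: "m = l * t" by (auto elim: dvdE)
  have "l * 1 < l * t" using t m by simp
  then have t2: "t \<ge> 2" by simp
  have k: "(m - 1) div l = t - 1"
  proof -
    have "m - 1 = (t - 1) * l + (l - 1)" using t t2 l by (simp add: algebra_simps diff_mult_distrib)
    then have "(m - 1) div l = ((l - 1) + (t - 1) * l) div l" by (simp add: add.commute)
    also have "\<dots> = (t - 1) + (l - 1) div l" by (rule div_mult_self1) (use l in simp)
    also have "(l - 1) div l = 0" using l by simp
    finally show ?thesis by simp
  qed
  define L where "L = real l"
  define T where "T = real t"
  have L2: "L \<ge> 2" and T2: "T \<ge> 2" using l t2 by (auto simp: L_def T_def)
  have "T * (3*L - 4) \<ge> 2 * (3*L - 4)" using T2 L2 by (intro mult_right_mono) auto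
  then have main: "3*L*T - 4*T - 3*L + 3 \<ge> 0" using L2 by (simp add: algebra_simps)
  have "real ((m - 1) div l) = T - 1" unfolding k using t2 by (simp add: T_def of_nat_diff)
  moreover have "real m = L * T" by (simp add: t L_def T_def)
  ultimately have goal: "real ((m - 1) div l) + real (if l dvd m then l else 1) + real m / (3 * real l)
     = (T - 1) + L + T/3" using True L2 by (simp add: L_def)
  have "(T - 1) + L + T/3 \<le> L * T" using main by (simp add: field_simps)
  then show ?thesis using goal \<open>real m = L*T\<close> by simp
next
  case False
  define k where "k = (m - 1) div l"
  have "k * l \<le> m - 1" by (simp add: k_def)
  then have "real (k * l) \<le> real (m - 1)" by (simp only: of_nat_le_iff)
  then have kl: "real k * real l \<le> real m - 1" using m by (simp add: of_nat_diff)
  define L where "L = real l"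
  define M where "M = real m"
  have L2: "L \<ge> 2" and hML: "M \<ge> L + 1" using l m by (auto simp: L_def M_def)
  have "M * (3*L - 4) \<ge> (L + 1) * (3*L - 4)" using hML L2 by (intro mult_right_mono) auto
  moreover have "(L+1)*(3*L-4) \<ge> 3*L - 3"
  proof -
    have "L*L \<ge> 2*L" using L2 by (intro mult_right_mono) auto
    moreover have "(L+1)*(3*L-4) = 3*(L*L) - L - 4" by (simp add: algebra_simps)
    ultimately show ?thesis using L2 by linarith
  qed
  ultimately have main: "3*L*M - 4*M - 3*L + 3 \<ge> 0" by (simp add: algebra_simps)
  have "3*L*real k \<le> 3*(M - 1)" using kl by (simp add: L_def M_def algebra_simps)
  then have "real k + 1 + M/(3*L) \<le> M" using main L2 by (simp add: field_simps)
  then show ?thesis using False by (simp add: k_def L_def M_def)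
qed

lemma card_S'_bound:
  fixes l m :: nat
  assumes l: "prime l" and m: "m \<ge> 1"
  shows "card {s. s \<le> l*m \<and> l dvd s \<and> m dvd s} \<le> (if l dvd m then l else 1) + 1"
proof (cases "l dvd m")
  case True
  have "{s. s \<le> l*m \<and> l dvd s \<and> m dvd s} \<subseteq> (\<lambda>i. i * m) ` {0..l}"
  proof
    fix s assume "s \<in> {s. s \<le> l*m \<and> l dvd s \<and> m dvd s}"
    then obtain i where si: "s = m * i" by (auto elim: dvdE)
    then have "m * i \<le> l * m" using \<open>s \<in> _\<close> by simp
    note this si
    then have "i \<le> l" using m by (simp add: mult.commute)
    then show "s \<in> (\<lambda>i. i * m) ` {0..l}" using si by (auto simp: mult.commute)
  qed
  then have "card {s. s \<le> l*m \<and> l dvd s \<and> m dvd s} \<le> card ((\<lambda>i. i * m) ` {0..l})" by (rule card_mono[rotated]) simp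
  also have "\<dots> \<le> card {0..l}" by (rule card_image_le) simp
  finally show ?thesis using True by simp
next
  case False
  have cop: "coprime l m" using l False by (simp add: prime_imp_coprime)
  have "{s. s \<le> l*m \<and> l dvd s \<and> m dvd s} \<subseteq> {0, l*m}"
  proof
    fix s assume s: "s \<in> {s. s \<le> l*m \<and> l dvd s \<and> m dvd s}"
    then have "l * m dvd s" using cop by (auto intro: divides_mult)
    then obtain i where "s = l * m * i" by (auto elim: dvdE)
    moreover have "l * m > 0" using l m prime_gt_0_nat by simp
    moreover have "\<not> i \<ge> 2"
    proof
      assume "i \<ge> 2"
      then have "l * m * 2 \<le> l * m * i" by simp
      then show False using s \<open>s = l*m*i\<close> \<open>l * m > 0\<close> by simp
    qed
    ultimately have "i \<le> 1" by simp
    then show "s \<in> {0, l*m}" using \<open>s = l*m*i\<close> by (cases i) auto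
  qed
  then have "card {s. s \<le> l*m \<and> l dvd s \<and> m dvd s} \<le> card {0, l*m}" by (rule card_mono[rotated]) simp
  also have "\<dots> \<le> 2" by (simp add: card_insert_if)
  finally show ?thesis using False by simp
qed


lemma card_field_ge2: "CARD('a::{finite,field}) \<ge> 2"
proof -
  have "card {0::'a, 1} \<le> CARD('a)" by (rule card_mono) auto
  then show ?thesis by simp
qed

theorem corollary5p5:
  fixes d :: nat
  assumes "d \<ge> 2"
  shows "(prime d \<longrightarrow> (decomp_set d :: ('a::{finite,field}) poly set) = {})
    \<and> real (card (decomp_set d :: 'a poly set))
        \<le> alpha_d CARD('a) d * (1 + real CARD('a) powr
             (- (real d / (3 * real (min_prime_factor d) ^ 2))))
    \<and> (\<not> CHAR('a) dvd d \<longrightarrow>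
        \<bar>real (card (decomp_set d :: 'a poly set)) - alpha_d CARD('a) d\<bar>
          \<le> alpha_d CARD('a) d * real CARD('a) powr
             (- (real d / (3 * real (min_prime_factor d) ^ 2))))"
proof -
  define q where "q = CARD('a)"
  define l where "l = min_prime_factor d"
  define m where "m = d div l"
  define D where "D = (decomp_set d :: 'a poly set)"
  define \<delta> where "\<delta> = real q powr (- (real d / (3 * real l ^ 2)))"
  define \<alpha> where "\<alpha> = alpha_d q d"
  have q2: "q \<ge> 2" unfolding q_def by (rule card_field_ge2)
  have \<alpha>eq: "\<alpha> = (if d = l then 0 else if d = l^2 then real q ^ (2*l) * (1 - 1/real q)
      else 2 * real q ^ (l + d div l) * (1 - 1/real q))"
    unfolding \<alpha>_def alpha_d_def l_def Let_def ..
  have lp: "prime l" "l dvd d" and H: "\<forall>p. prime p \<longrightarrow> p dvd d \<longrightarrow> l \<le> p"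
    using mpf[OF assms] unfolding l_def by auto
  have l2: "l \<ge> 2" using lp prime_ge_2_nat by blast
  have dlm: "d = l * m" using lp by (simp add: m_def)
  have m1: "m \<ge> 1" using dlm assms by (cases m) auto
  have \<delta>0: "\<delta> \<ge> 0" by (simp add: \<delta>_def)
  have dm: "real d / (3 * real l ^ 2) = real m / (3 * real l)"
    using l2 by (simp add: dlm power2_eq_square field_simps)
  have qpos: "real q > 0" using q2 by simp
  have Tq: "real q powr (real l + real m - real m / (3 * real l)) = real q ^ (l + m) * \<delta>"
  proof -
    have "real l + real m - real m / (3 * real l) = real (l + m) + (- (real m / (3 * real l)))" by simp
    then have "real q powr (real l + real m - real m / (3 * real l)) = real q powr real (l + m) * real q powr (- (real m / (3 * real l)))"
      by (simp only: powr_add)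
    also have "real q powr real (l + m) = real q ^ (l + m)" by (rule powr_realpow[OF qpos])
    also have "real q powr (- (real m / (3 * real l))) = \<delta>" unfolding \<delta>_def dm ..
    finally show ?thesis .
  qed
  have finD: "finite D"
    by (rule finite_subset[OF _ finite_le_n[of d]]) (auto simp: D_def decomp_set_def)
  define c where "c e = card (GG (d div e) :: 'a poly set) * card (PP e :: 'a poly set)" for e
  have cval': "real (c e) = real q ^ (e + d div e) * (1 - 1/real q)" if "e \<ge> 1" "d div e \<ge> 1" for e
  proof -
    have "real (c e) = real ((q ^ Suc (d div e) - q ^ (d div e)) * q ^ (e - 1))"
      using that by (simp add: c_def card_GG card_PP q_def)
    also have "\<dots> = real q ^ (d div e + e) * (1 - 1/real q)" using q2 that by (intro cval) auto
    finally show ?thesis by (simp add: add.commute)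
  qed
  have finAA: "finite (AA d e :: 'a poly set)" for e
    unfolding AA_def by (intro finite_imageI finite_cartesian_product finite_GG finite_PP)
  have upper0: "card D \<le> (\<Sum>e\<in>EE d. c e)"
  proof -
    have "card D \<le> card (\<Union>e\<in>EE d. (AA d e :: 'a poly set))"
      unfolding D_def using decomp_subset finite_EE assms finAA by (intro card_mono) auto
    also have "\<dots> \<le> (\<Sum>e\<in>EE d. card (AA d e :: 'a poly set))" by (rule card_UN_le) (use finite_EE assms in auto)
    also have "\<dots> \<le> (\<Sum>e\<in>EE d. c e)" unfolding c_def by (intro sum_mono card_AA_le)
    finally show ?thesis .
  qed
  have tame: "of_nat e \<noteq> (0::'a)" if "\<not> CHAR('a) dvd d" "e dvd d" for e
    using that dvd_trans of_nat_eq_0_iff_char_dvd by blast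
  have AAsub: "AA d e \<subseteq> D" if "e \<in> EE d" for e unfolding D_def using AA_subset[OF that] .
  consider (P) "prime d" | (S) "\<not> prime d" "d = l^2" | (G) "\<not> prime d" "d \<noteq> l^2" by blast
  then show ?thesis
  proof cases
    case P
    then have Dempty: "D = {}" using decomp_subset[of d] EE_prime[OF P] by (auto simp: D_def)
    have "d = l" using P prime_iff_mpf[OF assms] unfolding l_def by blast
    then have "\<alpha> = 0" by (simp add: \<alpha>eq)
    then show ?thesis using Dempty
      by (simp add: D_def[symmetric] \<alpha>_def[symmetric] q_def[symmetric] l_def[symmetric] \<delta>_def[symmetric])
  next
    case S
    then have ml: "m = l" using l2 by (simp add: m_def power2_eq_square)
    have "d \<noteq> l" using S(1) prime_iff_mpf[OF assms] unfolding l_def by blast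
    then have \<alpha>: "\<alpha> = real q ^ (2*l) * (1 - 1/real q)" using S by (simp add: \<alpha>eq)
    have "d = min_prime_factor d ^ 2" using S(2) unfolding l_def .
    from EE_sq[OF assms this] have EEl: "EE d = {l}" unfolding l_def .
    have cl: "real (c l) = \<alpha>" using cval'[of l] l2 ml \<alpha> by (simp add: m_def[symmetric] mult_2)
    have up: "real (card D) \<le> \<alpha>" using upper0 EEl cl by simp
    have \<alpha>0: "\<alpha> \<ge> 0" using q2 by (simp add: \<alpha>)
    have "\<alpha> * \<delta> \<ge> 0" using \<alpha>0 \<delta>0 by simp
    then have part2: "real (card D) \<le> \<alpha> * (1 + \<delta>)" using up by (simp add: algebra_simps)
    have part3: "\<bar>real (card D) - \<alpha>\<bar> \<le> \<alpha> * \<delta>" if t: "\<not> CHAR('a) dvd d"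
    proof -
      have "card (AA d l :: 'a poly set) = c l"
        unfolding c_def using l2 ml tame[OF t, of l] lp m1 by (intro card_AA_eq) (auto simp: m_def[symmetric])
      moreover have "card (AA d l :: 'a poly set) \<le> card D" using AAsub EEl finD by (intro card_mono) auto
      ultimately have "\<alpha> \<le> real (card D)" using cl by simp
      then show ?thesis using up \<alpha>0 \<delta>0 by simp
    qed
    show ?thesis using part2 part3 \<open>\<not> prime d\<close>
      by (simp add: D_def[symmetric] \<alpha>_def[symmetric] q_def[symmetric] l_def[symmetric] \<delta>_def[symmetric])
  next
    case G
    have "d \<noteq> l" using G(1) prime_iff_mpf[OF assms] unfolding l_def by blast
    then have m2: "m \<ge> 2" using dlm m1 by (cases "m = 1") auto
    have mnl: "m \<noteq> l" using G dlm by (auto simp: power2_eq_square)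
    have Hlm: "\<forall>p. prime p \<longrightarrow> p dvd l * m \<longrightarrow> l \<le> p" using H dlm by simp
    note EEg = EE_gen[OF lp(1) dlm H m2 mnl]
    define E' where "E' = {e. e dvd d \<and> l < e \<and> l < d div e}"
    have lm: "l < m" by (rule EEg(2))
    have dl: "d div l = m" and dmm: "d div m = l" using dlm l2 m1 by auto
    define X where "X = real q ^ (l + m) * (1 - 1/real q)"
    have \<alpha>: "\<alpha> = 2 * X" using G \<open>d \<noteq> l\<close> by (simp add: \<alpha>eq X_def dl)
    have cl: "real (c l) = X" using cval'[of l] l2 m1 dl by (simp add: X_def)
    have cm: "real (c m) = X" using cval'[of m] l2 m1 dmm by (simp add: X_def add.commute)
    have finE': "finite E'" by (rule finite_subset[of _ "{..d}"]) (use assms in \<open>auto simp: E'_def dest: dvd_imp_le\<close>)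
    have lE: "l \<notin> E'" and mE: "m \<notin> E'" by (auto simp: E'_def dmm)
    have sumEE: "(\<Sum>e\<in>EE d. real (c e)) = X + X + (\<Sum>e\<in>E'. real (c e))"
      using EEg(1) finE' lE mE lm cl cm by (simp add: E'_def[symmetric])
    have E'c: "(\<Sum>e\<in>E'. real (c e)) = (1 - 1/real q) * (\<Sum>e\<in>E'. real q ^ (e + d div e))"
    proof -
      have "(\<Sum>e\<in>E'. real (c e)) = (\<Sum>e\<in>E'. real q ^ (e + d div e) * (1 - 1/real q))"
        using l2 by (intro sum.cong refl cval') (auto simp: E'_def)
      then show ?thesis by (simp add: sum_distrib_left mult.commute)
    qed
    have N1: "(\<Sum>e\<in>E'. real q ^ (e + d div e)) \<le> 2 * (real q ^ (l + m) * \<delta>)"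
      using N1'[OF lp(1) Hlm q2] Tq by (simp add: E'_def dlm)
    have fac: "0 \<le> 1 - 1/real q" "1 - 1/real q \<le> 1" using q2 by auto
    have up: "real (card D) \<le> \<alpha> * (1 + \<delta>)"
    proof -
      have "real (card D) \<le> (\<Sum>e\<in>EE d. real (c e))" using upper0 by (simp flip: of_nat_sum)
      also have "\<dots> \<le> X + X + (1 - 1/real q) * (2 * (real q ^ (l + m) * \<delta>))"
        unfolding sumEE E'c using N1 fac by (simp add: mult_left_mono)
      also have "\<dots> = \<alpha> * (1 + \<delta>)" by (simp add: \<alpha> X_def algebra_simps add_divide_distrib)
      finally show ?thesis .
    qed
    have part3: "\<bar>real (card D) - \<alpha>\<bar> \<le> \<alpha> * \<delta>" if t: "\<not> CHAR('a) dvd d"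
    proof -
      have tl: "of_nat l \<noteq> (0::'a)" and tm: "of_nat m \<noteq> (0::'a)" using tame[OF t] dlm by auto
      have Al: "card (AA d l :: 'a poly set) = c l"
        unfolding c_def using l2 m1 tame[OF t, of m] dl dlm by (intro card_AA_eq) auto
      have Am: "card (AA d m :: 'a poly set) = c m"
        unfolding c_def using l2 m1 tame[OF t, of l] dmm dlm by (intro card_AA_eq) auto
      have lEE: "l \<in> EE d" "m \<in> EE d" using EEg(1) by auto
      have sub: "AA d l \<union> AA d m \<subseteq> D" using AAsub[OF lEE(1)] AAsub[OF lEE(2)] by auto
      have Ib: "card (AA d l \<inter> AA d m :: 'a poly set) \<le> q ^ (l - 1) * q ^ ((m - 1) div l) * q ^ card {s. s \<le> d \<and> l dvd s \<and> m dvd s}"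
        using inter_bound[OF _ m1 tl tm dlm] l2 by (simp add: q_def)
      have cS: "card {s. s \<le> d \<and> l dvd s \<and> m dvd s} \<le> (if l dvd m then l else 1) + 1"
        using card_S'_bound[OF lp(1) m1] by (simp add: dlm)
      define g where "g = (if l dvd m then l else 1)"
      have "q ^ (l - 1) * q ^ ((m - 1) div l) * q ^ card {s. s \<le> d \<and> l dvd s \<and> m dvd s} \<le> q ^ (l - 1) * q ^ ((m - 1) div l) * q ^ (g + 1)"
        using cS q2 by (intro mult_left_mono power_increasing) (auto simp: g_def)
      also have "\<dots> = q ^ (l + (m - 1) div l + g)"
      proof -
        have e: "(l - 1) + (m - 1) div l + (g + 1) = l + (m - 1) div l + g" using l2 by simp
        show ?thesis unfolding e[symmetric] by (simp only: power_add)
      qed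
      finally have "card (AA d l \<inter> AA d m :: 'a poly set) \<le> q ^ (l + (m - 1) div l + g)"
        using Ib by linarith
      then have "real (card (AA d l \<inter> AA d m :: 'a poly set)) \<le> real (q ^ (l + (m - 1) div l + g))"
        by (simp only: of_nat_le_iff)
      then have Ib2: "real (card (AA d l \<inter> AA d m :: 'a poly set)) \<le> real q ^ (l + (m - 1) div l + g)"
        by simp
      have "real q ^ (l + (m - 1) div l + g) = real q powr (real (l + (m - 1) div l + g))"
        by (rule powr_realpow[OF qpos, symmetric])
      also have "\<dots> \<le> real q powr (real l + real m - real m / (3 * real l))"
        using N2[OF l2 lm] q2 by (intro powr_mono) (auto simp: g_def)
      also have "\<dots> = real q ^ (l + m) * \<delta>" by (rule Tq)
      also have "\<dots> \<le> \<alpha> * \<delta>"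
      proof -
        have "1 \<le> 2 * (1 - 1/real q)" using q2 by (simp add: field_simps)
        then have "real q ^ (l + m) * 1 \<le> real q ^ (l + m) * (2 * (1 - 1/real q))"
          using qpos by (intro mult_left_mono) auto
        then have "real q ^ (l + m) \<le> \<alpha>" by (simp add: \<alpha> X_def algebra_simps)
        then show ?thesis using \<delta>0 by (intro mult_right_mono) auto
      qed
      finally have Ia: "real (card (AA d l \<inter> AA d m :: 'a poly set)) \<le> \<alpha> * \<delta>" using Ib2 by linarith
      have "card (AA d l \<union> AA d m :: 'a poly set) + card (AA d l \<inter> AA d m :: 'a poly set) = card (AA d l :: 'a poly set) + card (AA d m :: 'a poly set)"
        using card_Un_Int[OF finAA[of l] finAA[of m]] by simp
      moreover have "card (AA d l \<union> AA d m :: 'a poly set) \<le> card D" using sub finD by (rule card_mono[rotated])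
      ultimately have "real (card (AA d l :: 'a poly set)) + real (card (AA d m :: 'a poly set)) \<le> real (card D) + real (card (AA d l \<inter> AA d m :: 'a poly set))"
        by (simp flip: of_nat_add)
      then have "\<alpha> - real (card D) \<le> \<alpha> * \<delta>" using Al Am cl cm Ia \<alpha> by linarith
      moreover have "real (card D) - \<alpha> \<le> \<alpha> * \<delta>" using up by (simp add: algebra_simps)
      ultimately show ?thesis by linarith
    qed
    show ?thesis using up part3 \<open>\<not> prime d\<close>
      by (simp add: D_def[symmetric] \<alpha>_def[symmetric] q_def[symmetric] l_def[symmetric] \<delta>_def[symmetric])
  qed
qed


end
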